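(* Under the setting of the algorithm in the context, fix $\delta>0$ and set, for each $i$, $$\epsilon_i=\delta\frac{q_i}{c_i(q_i-|s_i-1|)}.$$ Then for every $i_0\in\{1,\dots,n\}$, every pair of initial states $\theta_0^{(1)},\theta_0^{(2)}$ with $|\theta^{(2)}_{0,i_0}-\theta^{(1)}_{0,i_0}|\le\delta$ and $\theta^{(2)}_{0,i}=\theta^{(1)}_{0,i}$ for $i\neq i_0$, and every Borel set $\mathcal{O}\subseteq(\mathbb{R}^n)^{\mathbb{N}}$, $$\mathbb{P}\{\boldsymbol\eta: X_{\theta_0^{(1)}}(\boldsymbol\eta)\in\mathcal{O}\}\le e^{\epsilon_{i_0}}\,\mathbb{P}\{\boldsymbol\eta: X_{\theta_0^{(2)}}(\boldsymbol\eta)\in\mathcal{O}\}.$$ Consequently the algorithm is $\epsilon$-differentially private with $\epsilon=\max_i\epsilon_i$.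
   Context: $n$ agents communicate over an undirected connected weighted graph with symmetric nonnegative adjacency matrix $A$, weighted degree matrix $D=\mathrm{diag}(A\mathbf{1}_n)$, Laplacian $L=D-A$, and maximal weighted degree $d_{\max}$. The algorithm is $$\theta(k+1)=\theta(k)-hLx(k)+S\eta(k),\qquad x(k)=\theta(k)+\eta(k),\qquad \theta(0)=\theta_0,$$ where $0<h<1/d_{\max}$, $S=\mathrm{diag}(s_1,\dots,s_n)$ with $s_i\in(0,2)$, and the noises $\eta_i(k)$ are mutually independent with $\eta_i(k)\sim\mathrm{Lap}(c_iq_i^k)$ (zero-mean Laplace with density $\frac{1}{2b}e^{-|x|/b}$), $c_i>0$, $q_i\in(|s_i-1|,1)$. For fixed $\theta_0$, $X_{\theta_0}:(\mathbb{R}^n)^{\mathbb{N}}\to(\mathbb{R}^n)^{\mathbb{N}}$ maps the noise sequence $\boldsymbol\eta=\{\eta(k)\}_{k\ge0}$ to the message sequence $\{x(k)\}_{k\ge0}$. Initial states are $\delta$-adjacent if they differ in at most one component by at most $\delta$; the algorithm is $\epsilon$-differentially private if the displayed inequality holds with $e^{\epsilon}$ for all $\delta$-adjacent pairs and all Borel $\mathcal{O}$ (product topology). *)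

theory Defs
  imports "HOL-Probability.Probability"
begin

(* Agents are indexed by a finite type 'n (so n = CARD('n)); vectors in R^n are 'n => real. *)

definition laplace :: "real \<Rightarrow> real measure" where
  "laplace b = density lborel (\<lambda>x. ennreal (exp (- \<bar>x\<bar> / b) / (2 * b)))"

definition wdeg :: "('n::finite \<Rightarrow> 'n \<Rightarrow> real) \<Rightarrow> 'n \<Rightarrow> real" where
  "wdeg A i = (\<Sum>j\<in>UNIV. A i j)"

definition dmax :: "('n::finite \<Rightarrow> 'n \<Rightarrow> real) \<Rightarrow> real" where
  "dmax A = Max (range (wdeg A))"

definition lap :: "('n::finite \<Rightarrow> 'n \<Rightarrow> real) \<Rightarrow> ('n \<Rightarrow> real) \<Rightarrow> ('n \<Rightarrow> real)" where
  "lap A x = (\<lambda>i. wdeg A i * x i - (\<Sum>j\<in>UNIV. A i j * x j))"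

definition graph_ok :: "('n::finite \<Rightarrow> 'n \<Rightarrow> real) \<Rightarrow> bool" where
  "graph_ok A \<longleftrightarrow> (\<forall>i j. A i j = A j i) \<and> (\<forall>i j. 0 \<le> A i j) \<and>
     (\<forall>i j. (i, j) \<in> {(a, b). 0 < A a b}\<^sup>*)"

fun theta :: "('n::finite \<Rightarrow> 'n \<Rightarrow> real) \<Rightarrow> real \<Rightarrow> ('n \<Rightarrow> real) \<Rightarrow> ('n \<Rightarrow> real)
     \<Rightarrow> (nat \<Rightarrow> 'n \<Rightarrow> real) \<Rightarrow> nat \<Rightarrow> ('n \<Rightarrow> real)" where
  "theta A h s th0 eta 0 = th0"
| "theta A h s th0 eta (Suc k) =
     (\<lambda>i. theta A h s th0 eta k i
          - h * lap A (\<lambda>j. theta A h s th0 eta k j + eta k j) i + s i * eta k i)"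

definition Xmap :: "('n::finite \<Rightarrow> 'n \<Rightarrow> real) \<Rightarrow> real \<Rightarrow> ('n \<Rightarrow> real) \<Rightarrow> ('n \<Rightarrow> real)
     \<Rightarrow> (nat \<Rightarrow> 'n \<Rightarrow> real) \<Rightarrow> (nat \<Rightarrow> 'n \<Rightarrow> real)" where
  "Xmap A h s th0 eta = (\<lambda>k i. theta A h s th0 eta k i + eta k i)"

definition noise :: "('n \<Rightarrow> real) \<Rightarrow> ('n \<Rightarrow> real) \<Rightarrow> (nat \<Rightarrow> 'n \<Rightarrow> real) measure" where
  "noise c q = (\<Pi>\<^sub>M k\<in>UNIV. \<Pi>\<^sub>M i\<in>UNIV. laplace (c i * q i ^ k))"

definition adjacent :: "real \<Rightarrow> ('n \<Rightarrow> real) \<Rightarrow> ('n \<Rightarrow> real) \<Rightarrow> bool" where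
  "adjacent \<delta> t1 t2 \<longleftrightarrow> (\<exists>i0. \<bar>t2 i0 - t1 i0\<bar> \<le> \<delta> \<and> (\<forall>i. i \<noteq> i0 \<longrightarrow> t2 i = t1 i))"

definition diff_private ::
  "('n::finite \<Rightarrow> 'n \<Rightarrow> real) \<Rightarrow> real \<Rightarrow> ('n \<Rightarrow> real) \<Rightarrow> ('n \<Rightarrow> real) \<Rightarrow> ('n \<Rightarrow> real)
    \<Rightarrow> real \<Rightarrow> real \<Rightarrow> bool" where
  "diff_private A h s c q \<delta> \<epsilon> \<longleftrightarrow>
     (\<forall>t1 t2 U. adjacent \<delta> t1 t2 \<longrightarrow> U \<in> sets (borel :: (nat \<Rightarrow> 'n \<Rightarrow> real) measure) \<longrightarrow>
        measure (noise c q) {eta \<in> space (noise c q). Xmap A h s t1 eta \<in> U}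
        \<le> exp \<epsilon> * measure (noise c q) {eta \<in> space (noise c q). Xmap A h s t2 eta \<in> U})"

end

theory Submission
  imports Defs
begin


lemma laplace_prob:
  assumes b: "0 < b"
  shows "prob_space (laplace b)"
proof -
  define l where "l = 1 / b"
  have l: "0 < l" using b by (simp add: l_def)
  have ED: "(\<integral>\<^sup>+x. ennreal (exponential_density l x) \<partial>lborel) = 1"
    using prob_space.emeasure_space_1[OF prob_space_exponential_density[OF l]]
    by (simp add: emeasure_density)
  have ED': "(\<integral>\<^sup>+x. ennreal (exponential_density l (-x)) \<partial>lborel) = 1"
    using nn_integral_real_affine[of "\<lambda>x. ennreal (exponential_density l x)" "-1" 0] ED
    by simp
  have AE: "AE x in lborel. ennreal (exp (- \<bar>x\<bar> / b) / (2 * b)) =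
      (ennreal (exponential_density l x) + ennreal (exponential_density l (-x))) / 2"
    using AE_lborel_singleton[of 0]
  proof eventually_elim
    case (elim x)
    have "exp (- \<bar>x\<bar> / b) / (2 * b) = (exponential_density l x + exponential_density l (-x)) / 2"
      using elim b by (auto simp: exponential_density_def l_def field_simps)
    also have "ennreal \<dots> = ennreal (exponential_density l x + exponential_density l (-x)) / 2"
      by (rule ennreal_divide_numeral[symmetric]) (use l in \<open>auto simp: exponential_density_def intro!: add_nonneg_nonneg\<close>)
    also have "\<dots> = (ennreal (exponential_density l x) + ennreal (exponential_density l (-x))) / 2"
      by (subst ennreal_plus) (use l in \<open>auto simp: exponential_density_def\<close>)
    finally show ?case .
  qed
  have "emeasure (laplace b) (space (laplace b)) =
      (\<integral>\<^sup>+x. ennreal (exp (- \<bar>x\<bar> / b) / (2 * b)) \<partial>lborel)"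
    unfolding laplace_def by (subst emeasure_density) (auto simp: space_density)
  also have "\<dots> = (\<integral>\<^sup>+x. (ennreal (exponential_density l x) + ennreal (exponential_density l (-x))) / 2 \<partial>lborel)"
    by (rule nn_integral_cong_AE[OF AE])
  also have "\<dots> = 1"
    by (simp add: nn_integral_divide nn_integral_add ED ED')
  finally have "emeasure (laplace b) (space (laplace b)) = 1" .
  then show ?thesis by (rule prob_spaceI)
qed

definition shift_le :: "'a measure \<Rightarrow> ('a \<Rightarrow> 'a) \<Rightarrow> ennreal \<Rightarrow> bool" where
  "shift_le M T C \<longleftrightarrow> T \<in> M \<rightarrow>\<^sub>M M \<and>
     (\<forall>f\<in>borel_measurable M. integral\<^sup>N M f \<le> C * (\<integral>\<^sup>+x. f (T x) \<partial>M))"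

lemma shift_le_id: "shift_le M (\<lambda>x. x) 1"
  by (simp add: shift_le_def)

lemma shift_le_laplace:
  assumes b: "0 < b"
  shows "shift_le (laplace b) (\<lambda>x. x + a) (ennreal (exp (\<bar>a\<bar> / b)))"
  unfolding shift_le_def
proof (intro conjI ballI)
  have sl: "sets (laplace b) = sets borel" by (simp add: laplace_def)
  show "(\<lambda>x. x + a) \<in> laplace b \<rightarrow>\<^sub>M laplace b"
    unfolding measurable_cong_sets[OF sl sl] by measurable
  fix f :: "real \<Rightarrow> ennreal" assume f: "f \<in> borel_measurable (laplace b)"
  then have fm[measurable]: "f \<in> borel_measurable borel"
    using f measurable_cong_sets[OF sl refl] by blast
  define p where "p x = ennreal (exp (- \<bar>x\<bar> / b) / (2 * b))" for x
  have pm[measurable]: "p \<in> borel_measurable borel" unfolding p_def by measurable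
  have "integral\<^sup>N (laplace b) f = (\<integral>\<^sup>+x. p x * f x \<partial>lborel)"
    unfolding laplace_def p_def by (subst nn_integral_density) auto
  also have "\<dots> \<le> (\<integral>\<^sup>+y. ennreal (exp (\<bar>a\<bar> / b)) * (p (y - a) * f y) \<partial>lborel)"
  proof (rule nn_integral_mono)
    fix y :: real
    have "exp (- \<bar>y\<bar> / b) \<le> exp (\<bar>a\<bar> / b) * exp (- \<bar>y - a\<bar> / b)"
    proof -
      have "- \<bar>y\<bar> / b \<le> \<bar>a\<bar> / b + - \<bar>y - a\<bar> / b"
      proof -
        have "\<bar>y - a\<bar> / b \<le> (\<bar>y\<bar> + \<bar>a\<bar>) / b"
          using b abs_triangle_ineq4[of y a] by (simp add: divide_right_mono)
        then show ?thesis by (simp add: add_divide_distrib)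
      qed
      then show ?thesis by (simp add: exp_add[symmetric])
    qed
    then have "exp (- \<bar>y\<bar> / b) / (2 * b) \<le> exp (\<bar>a\<bar> / b) * (exp (- \<bar>y - a\<bar> / b) / (2 * b))"
      using b by (simp add: divide_right_mono)
    then have "p y \<le> ennreal (exp (\<bar>a\<bar> / b)) * p (y - a)"
      unfolding p_def using b by (simp add: ennreal_mult[symmetric])
    then show "p y * f y \<le> ennreal (exp (\<bar>a\<bar> / b)) * (p (y - a) * f y)"
      by (metis mult.assoc mult_right_mono zero_le)
  qed
  also have "\<dots> = ennreal (exp (\<bar>a\<bar> / b)) * (\<integral>\<^sup>+y. p (y - a) * f y \<partial>lborel)"
    by (rule nn_integral_cmult) measurable
  also have "(\<integral>\<^sup>+y. p (y - a) * f y \<partial>lborel) = (\<integral>\<^sup>+x. p x * f (x + a) \<partial>lborel)"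
    using nn_integral_real_affine[of "\<lambda>y. p (y - a) * f y" 1 a] by (simp add: add.commute)
  also have "\<dots> = (\<integral>\<^sup>+x. f (x + a) \<partial>laplace b)"
    unfolding laplace_def p_def by (subst nn_integral_density) auto
  finally show "integral\<^sup>N (laplace b) f \<le> ennreal (exp (\<bar>a\<bar> / b)) * (\<integral>\<^sup>+x. f (x + a) \<partial>laplace b)" .
qed



lemma shift_le_PiM:
  fixes M :: "'i \<Rightarrow> 'a measure"
  assumes J: "finite J" and sf: "\<And>j. sigma_finite_measure (M j)"
    and sh: "\<And>j. j \<in> J \<Longrightarrow> shift_le (M j) (T j) (C j)"
  shows "shift_le (PiM J M) (\<lambda>x. \<lambda>j\<in>J. T j (x j)) (\<Prod>j\<in>J. C j)"
  using J sh
proof (induction J rule: finite_induct)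
  case empty
  have A: "(\<lambda>x. \<lambda>j\<in>{}. T j (x j)) \<in> PiM {} M \<rightarrow>\<^sub>M PiM {} M"
    by (rule measurable_restrict) auto
  have B: "integral\<^sup>N (PiM {} M) f = (\<integral>\<^sup>+x. f (\<lambda>j\<in>{}. T j (x j)) \<partial>PiM {} M)" for f
    by (rule nn_integral_cong) (auto simp: space_PiM_empty restrict_def)
  show ?case unfolding shift_le_def prod.empty mult_1
    using A B by (intro conjI ballI) (auto intro: eq_refl)
next
  case (insert i J)
  interpret product_sigma_finite M by (simp add: product_sigma_finite_def sf)
  have shi: "shift_le (M i) (T i) (C i)" using insert by simp
  have IH: "shift_le (PiM J M) (\<lambda>x. \<lambda>j\<in>J. T j (x j)) (\<Prod>j\<in>J. C j)"
    by (rule insert.IH) (rule insert.prems, simp)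
  have Tm: "T j \<in> M j \<rightarrow>\<^sub>M M j" if "j \<in> insert i J" for j
    using insert.prems[OF that] by (simp add: shift_le_def)
  have Tim[measurable]: "T i \<in> M i \<rightarrow>\<^sub>M M i" using Tm by simp
  let ?S = "\<lambda>x. \<lambda>j\<in>insert i J. T j (x j)"
  let ?SJ = "\<lambda>x. \<lambda>j\<in>J. T j (x j)"
  have Sm[measurable]: "?S \<in> PiM (insert i J) M \<rightarrow>\<^sub>M PiM (insert i J) M"
  proof (rule measurable_restrict)
    fix j assume j: "j \<in> insert i J"
    show "(\<lambda>x. T j (x j)) \<in> PiM (insert i J) M \<rightarrow>\<^sub>M M j"
      by (rule measurable_compose[OF measurable_component_singleton[OF j, of M] Tm[OF j]])
  qed
  have SJm[measurable]: "?SJ \<in> PiM J M \<rightarrow>\<^sub>M PiM J M"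
    using IH by (simp add: shift_le_def)
  have upd: "(\<lambda>p. (fst p)(i := snd p)) \<in> PiM J M \<Otimes>\<^sub>M M i \<rightarrow>\<^sub>M PiM (insert i J) M"
    by (rule measurable_fun_upd[where J=J]) auto
  have "integral\<^sup>N (PiM (insert i J) M) f \<le> (\<Prod>j\<in>insert i J. C j) * (\<integral>\<^sup>+x. f (?S x) \<partial>PiM (insert i J) M)"
    if f[measurable]: "f \<in> borel_measurable (PiM (insert i J) M)" for f
  proof -
    have fupd[measurable]: "(\<lambda>(x, y). f (x(i := y))) \<in> borel_measurable (PiM J M \<Otimes>\<^sub>M M i)"
      using measurable_comp[OF upd f] by (simp add: comp_def case_prod_beta')
    have fupdT: "(\<lambda>(x, y). f (x(i := T i y))) \<in> borel_measurable (PiM J M \<Otimes>\<^sub>M M i)"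
      using measurable_comp[OF measurable_Pair[OF measurable_fst measurable_compose[OF measurable_snd Tim]] fupd]
      by (simp add: comp_def case_prod_beta')
    define g where "g x = (\<integral>\<^sup>+y. f (x(i := T i y)) \<partial>M i)" for x
    have gm: "g \<in> borel_measurable (PiM J M)"
      unfolding g_def using fupdT by (rule borel_measurable_nn_integral)
    have "integral\<^sup>N (PiM (insert i J) M) f = (\<integral>\<^sup>+x. (\<integral>\<^sup>+y. f (x(i := y)) \<partial>M i) \<partial>PiM J M)"
      by (rule product_nn_integral_insert) (use insert in auto)
    also have "\<dots> \<le> (\<integral>\<^sup>+x. C i * g x \<partial>PiM J M)"
    proof (rule nn_integral_mono)
      fix x assume x: "x \<in> space (PiM J M)"
      have "(\<lambda>y. f (x(i := y))) \<in> borel_measurable (M i)"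
        using measurable_comp[OF measurable_component_update[OF x insert(2)] f] by (simp add: comp_def)
      then show "(\<integral>\<^sup>+y. f (x(i := y)) \<partial>M i) \<le> C i * g x"
        using shi unfolding shift_le_def g_def by blast
    qed
    also have "\<dots> = C i * (\<integral>\<^sup>+x. g x \<partial>PiM J M)"
      by (rule nn_integral_cmult) (rule gm)
    also have "\<dots> \<le> C i * ((\<Prod>j\<in>J. C j) * (\<integral>\<^sup>+x. g (?SJ x) \<partial>PiM J M))"
      using IH gm unfolding shift_le_def by (intro mult_left_mono) auto
    also have "(\<integral>\<^sup>+x. g (?SJ x) \<partial>PiM J M) = (\<integral>\<^sup>+x. (\<integral>\<^sup>+y. f (?S (x(i := y))) \<partial>M i) \<partial>PiM J M)"
    proof (rule nn_integral_cong)
      fix x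
      show "g (?SJ x) = (\<integral>\<^sup>+y. f (?S (x(i := y))) \<partial>M i)"
        unfolding g_def
      proof (rule nn_integral_cong)
        fix y
        have "(?SJ x)(i := T i y) = ?S (x(i := y))"
          using insert(2) by (auto simp: fun_eq_iff restrict_def)
        then show "f ((?SJ x)(i := T i y)) = f (?S (x(i := y)))" by simp
      qed
    qed
    also have "\<dots> = (\<integral>\<^sup>+x. f (?S x) \<partial>PiM (insert i J) M)"
      by (rule product_nn_integral_insert[symmetric]) (use insert in auto)
    finally show ?thesis
      using insert(1,2) by (simp add: mult.assoc)
  qed
  then show ?case using Sm unfolding shift_le_def by blast
qed



lemma approx_algebra:
  assumes alg: "algebra \<Omega> A"
    and fmu: "finite_measure mu" and fnu: "finite_measure nu"
    and smu: "sets mu = sigma_sets \<Omega> A" and snu: "sets nu = sigma_sets \<Omega> A"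
    and S: "S \<in> sigma_sets \<Omega> A"
  shows "\<forall>e>0. \<exists>G\<in>A. measure mu ((S - G) \<union> (G - S)) < e \<and> measure nu ((S - G) \<union> (G - S)) < e"
proof -
  interpret algebra \<Omega> A by (rule alg)
  interpret mu: finite_measure mu by (rule fmu)
  interpret nu: finite_measure nu by (rule fnu)
  have Ist: "Int_stable A" by (auto simp: Int_stable_def Int)
  show ?thesis
    using Ist space_closed S
  proof (induction rule: sigma_sets_induct_disjoint)
    case (basic G)
    then show ?case by (intro allI impI bexI[of _ G]) auto
  next
    case empty
    then show ?case by (intro allI impI bexI[of _ "{}"]) auto
  next
    case (compl X)
    show ?case
    proof (intro allI impI)
      fix e :: real assume e: "0 < e"
      obtain G where G: "G \<in> A" "measure mu ((X - G) \<union> (G - X)) < e" "measure nu ((X - G) \<union> (G - X)) < e"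
        using compl e by blast
      have XO: "X \<subseteq> \<Omega>" using compl(1) sigma_sets_into_sp[OF space_closed] by blast
      have GO: "G \<subseteq> \<Omega>" using G(1) space_closed by blast
      have eq: "((\<Omega> - X) - (\<Omega> - G)) \<union> ((\<Omega> - G) - (\<Omega> - X)) = (X - G) \<union> (G - X)"
        using XO GO by blast
      show "\<exists>G\<in>A. measure mu ((\<Omega> - X - G) \<union> (G - (\<Omega> - X))) < e \<and> measure nu ((\<Omega> - X - G) \<union> (G - (\<Omega> - X))) < e"
        using G eq by (intro bexI[of _ "\<Omega> - G"]) (auto simp: compl_sets)
    qed
  next
    case (union F)
    show ?case
    proof (intro allI impI)
      fix e :: real assume e: "0 < e"
      have Fs: "F i \<in> sigma_sets \<Omega> A" for i using union(2) by blast
      have Fmu: "F i \<in> sets mu" and Fnu: "F i \<in> sets nu" for i using Fs smu snu by auto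
      define P where "P n = (\<Union>i<n. F i)" for n
      have Pmu: "P n \<in> sets mu" and Pnu: "P n \<in> sets nu" for n
        unfolding P_def using Fmu Fnu by auto
      have incP: "incseq P" unfolding P_def incseq_def by (auto intro: less_le_trans)
      have UP: "(\<Union>n. P n) = (\<Union>i. F i)" unfolding P_def by auto
      have lmu: "(\<lambda>n. measure mu (P n)) \<longlonglongrightarrow> measure mu (\<Union>i. F i)"
        using mu.finite_Lim_measure_incseq[OF _ incP] Pmu UP by auto
      have lnu: "(\<lambda>n. measure nu (P n)) \<longlonglongrightarrow> measure nu (\<Union>i. F i)"
        using nu.finite_Lim_measure_incseq[OF _ incP] Pnu UP by auto
      have e2: "0 < e / 2" using e by simp
      have "eventually (\<lambda>n. measure mu (\<Union>i. F i) - e/2 < measure mu (P n)) sequentially"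
        using order_tendstoD(1)[OF lmu, of "measure mu (\<Union>i. F i) - e/2"] e by simp
      moreover have "eventually (\<lambda>n. measure nu (\<Union>i. F i) - e/2 < measure nu (P n)) sequentially"
        using order_tendstoD(1)[OF lnu, of "measure nu (\<Union>i. F i) - e/2"] e by simp
      ultimately obtain n where
        n1: "measure mu (\<Union>i. F i) - e/2 < measure mu (P n)" and
        n2: "measure nu (\<Union>i. F i) - e/2 < measure nu (P n)"
        using eventually_sequentially by (metis (no_types, lifting) eventually_conj_iff le_refl)
      define e' where "e' = e / (2 * (real n + 1))"
      have e': "0 < e'" using e by (simp add: e'_def)
      have "\<forall>i. \<exists>G\<in>A. measure mu ((F i - G) \<union> (G - F i)) < e' \<and> measure nu ((F i - G) \<union> (G - F i)) < e'"
        using union(3) e' by blast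
      then obtain Gf where Gf: "\<And>i. Gf i \<in> A"
        "\<And>i. measure mu ((F i - Gf i) \<union> (Gf i - F i)) < e'"
        "\<And>i. measure nu ((F i - Gf i) \<union> (Gf i - F i)) < e'"
        by metis
      define G where "G = (\<Union>i<n. Gf i)"
      have GA: "G \<in> A" unfolding G_def using Gf(1) by (intro finite_UN) auto
      define D where "D i = (F i - Gf i) \<union> (Gf i - F i)" for i
      define R where "R = (\<Union>i. F i) - P n"
      have sub: "((\<Union>i. F i) - G) \<union> (G - (\<Union>i. F i)) \<subseteq> R \<union> (\<Union>i<n. D i)"
        unfolding R_def P_def G_def D_def by auto
      have Gs: "Gf i \<in> sigma_sets \<Omega> A" for i using Gf(1) by auto
      have Gmu: "Gf i \<in> sets mu" and Gnu: "Gf i \<in> sets nu" for i using Gs smu snu by auto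
      have Dmu: "D i \<in> sets mu" and Dnu: "D i \<in> sets nu" for i
        unfolding D_def by (intro sets.Un sets.Diff Fmu Gmu Fnu Gnu)+
      have Rmu: "R \<in> sets mu" and Rnu: "R \<in> sets nu"
        unfolding R_def using Fmu Fnu Pmu Pnu by auto
      have UDmu: "(\<Union>i<n. D i) \<in> sets mu" and UDnu: "(\<Union>i<n. D i) \<in> sets nu" using Dmu Dnu by auto
      have bound: "measure M (((\<Union>i. F i) - G) \<union> (G - (\<Union>i. F i))) < e"
        if fm: "finite_measure M" and DM: "\<And>i. D i \<in> sets M" and RM: "R \<in> sets M"
          and Dl: "\<And>i. measure M (D i) < e'" and Rl: "measure M R < e / 2" for M
      proof -
        interpret M: finite_measure M by (rule fm)
        have "measure M (((\<Union>i. F i) - G) \<union> (G - (\<Union>i. F i))) \<le> measure M (R \<union> (\<Union>i<n. D i))"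
          by (rule M.finite_measure_mono[OF sub]) (use DM RM in auto)
        also have "\<dots> \<le> measure M R + measure M (\<Union>i<n. D i)"
          by (rule measure_Un_le) (use DM RM in auto)
        also have "measure M (\<Union>i<n. D i) \<le> (\<Sum>i<n. measure M (D i))"
          by (rule measure_UNION_le) (use DM in auto)
        also have "\<dots> \<le> (\<Sum>i<n. e')"
          using Dl by (intro sum_mono) (simp add: less_imp_le)
        also have "\<dots> = real n * e'" by simp
        also have "real n * e' \<le> e / 2"
          using e by (simp add: e'_def field_simps)
        finally show ?thesis using Rl by linarith
      qed
      have Rmul: "measure mu R < e / 2"
        unfolding R_def using n1 mu.finite_measure_Diff[OF _ Pmu, of "\<Union>i. F i"] Fmu
        by (subst mu.finite_measure_Diff) (auto simp: P_def)
      have Rnul: "measure nu R < e / 2"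
        unfolding R_def using n2 Fnu
        by (subst nu.finite_measure_Diff) (auto simp: P_def)
      show "\<exists>G\<in>A. measure mu ((\<Union>i. F i) - G \<union> (G - (\<Union>i. F i))) < e \<and>
              measure nu ((\<Union>i. F i) - G \<union> (G - (\<Union>i. F i))) < e"
        using bound[OF fmu Dmu Rmu _ Rmul] bound[OF fnu Dnu Rnu _ Rnul] Gf(2,3) GA
        unfolding D_def by blast
    qed
  qed
qed

lemma ineq_extend:
  assumes alg: "algebra \<Omega> A"
    and fmu: "finite_measure mu" and fnu: "finite_measure nu"
    and smu: "sets mu = sigma_sets \<Omega> A" and snu: "sets nu = sigma_sets \<Omega> A"
    and E: "0 \<le> E"
    and basic: "\<And>G. G \<in> A \<Longrightarrow> measure mu G \<le> E * measure nu G"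
    and S: "S \<in> sets mu"
  shows "measure mu S \<le> E * measure nu S"
proof (rule field_le_epsilon)
  fix e :: real assume e: "0 < e"
  define e' where "e' = e / (E + 1)"
  have e': "0 < e'" using e E by (simp add: e'_def)
  have S': "S \<in> sigma_sets \<Omega> A" using S smu by simp
  obtain G where G: "G \<in> A" "measure mu ((S - G) \<union> (G - S)) < e'" "measure nu ((S - G) \<union> (G - S)) < e'"
    using approx_algebra[OF alg fmu fnu smu snu S'] e' by blast
  have Gs: "G \<in> sigma_sets \<Omega> A" using G(1) by auto
  have Gmu: "G \<in> sets mu" and Gnu: "G \<in> sets nu" using Gs smu snu by auto
  have Snu: "S \<in> sets nu" using S' snu by simp
  have Dmu: "(S - G) \<union> (G - S) \<in> sets mu" using S Gmu by auto
  have Dnu: "(S - G) \<union> (G - S) \<in> sets nu" using Snu Gnu by auto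
  interpret mu: finite_measure mu by (rule fmu)
  interpret nu: finite_measure nu by (rule fnu)
  have "measure mu S \<le> measure mu (G \<union> ((S - G) \<union> (G - S)))"
    by (rule mu.finite_measure_mono) (use Gmu Dmu in auto)
  also have "\<dots> \<le> measure mu G + measure mu ((S - G) \<union> (G - S))"
    by (rule measure_Un_le) (use Gmu Dmu in auto)
  also have "\<dots> \<le> E * measure nu G + e'" using basic[OF G(1)] G(2) by linarith
  also have "measure nu G \<le> measure nu (S \<union> ((S - G) \<union> (G - S)))"
    by (rule nu.finite_measure_mono) (use Snu Dnu in auto)
  also have "\<dots> \<le> measure nu S + measure nu ((S - G) \<union> (G - S))"
    by (rule measure_Un_le) (use Snu Dnu in auto)
  finally have "measure mu S \<le> E * (measure nu S + measure nu ((S - G) \<union> (G - S))) + e'"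
    using E by (simp add: mult_left_mono)
  also have "\<dots> \<le> E * (measure nu S + e') + e'"
    using E G(3) by (intro add_right_mono mult_left_mono) auto
  also have "\<dots> = E * measure nu S + (E + 1) * e'"
    by (simp add: algebra_simps)
  also have "(E + 1) * e' = e"
    using E by (simp add: e'_def)
  finally show "measure mu S \<le> E * measure nu S + e" .
qed



lemma inf_shift:
  fixes M :: "nat \<Rightarrow> 'a measure" and T :: "nat \<Rightarrow> 'a \<Rightarrow> 'a" and C :: "nat \<Rightarrow> real"
  assumes ps: "\<And>k. prob_space (M k)"
    and sh: "\<And>k. shift_le (M k) (T k) (ennreal (C k))"
    and C: "\<And>k. 0 \<le> C k"
    and bnd: "\<And>J. finite J \<Longrightarrow> (\<Prod>k\<in>J. C k) \<le> E"
    and E: "0 \<le> E"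
    and S: "S \<in> sets (PiM UNIV M)"
  shows "measure (PiM UNIV M) S \<le> E * measure (PiM UNIV M) ((\<lambda>x k. T k (x k)) -` S \<inter> space (PiM UNIV M))"
proof -
  interpret product_prob_space M UNIV
    by (simp add: product_prob_space_def product_sigma_finite_def product_prob_space_axioms_def
        ps prob_space_imp_sigma_finite)
  let ?P = "PiM UNIV M"
  let ?tau = "\<lambda>x k. T k (x k)"
  have Tm: "T k \<in> M k \<rightarrow>\<^sub>M M k" for k using sh[of k] by (simp add: shift_le_def)
  have taum: "?tau \<in> ?P \<rightarrow>\<^sub>M ?P"
  proof -
    have "(\<lambda>x. \<lambda>k\<in>UNIV. T k (x k)) \<in> ?P \<rightarrow>\<^sub>M ?P"
    proof (rule measurable_restrict)
      fix j :: nat assume j: "j \<in> UNIV"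
      show "(\<lambda>x. T j (x j)) \<in> ?P \<rightarrow>\<^sub>M M j"
        by (rule measurable_compose[OF measurable_component_singleton[OF j, of M] Tm])
    qed
    then show ?thesis by (simp add: restrict_def)
  qed
  define nu where "nu = distr ?P ?P ?tau"
  have fnu: "finite_measure nu"
    unfolding nu_def using prob_space_distr[OF taum] by (simp add: prob_space.axioms(1))
  have fP: "finite_measure ?P" by (rule prob_space.axioms(1)) (rule P.prob_space_axioms)
  have snu: "sets nu = sets ?P" by (simp add: nu_def)
  have mnu: "measure nu X = measure ?P (?tau -` X \<inter> space ?P)" if "X \<in> sets ?P" for X
    unfolding nu_def by (rule measure_distr[OF taum that])
  have basic: "measure ?P G \<le> E * measure nu G" if G: "G \<in> generator" for G
  proof -
    from G obtain J X where J: "finite J" and X: "X \<in> sets (PiM J M)" and GJ: "G = emb UNIV J X"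
      by (auto elim!: generator.cases)
    interpret J: finite_product_prob_space M J
      by unfold_locales (rule J)
    let ?tJ = "\<lambda>x. \<lambda>j\<in>J. T j (x j)"
    have shJ: "shift_le (PiM J M) ?tJ (\<Prod>j\<in>J. ennreal (C j))"
      by (rule shift_le_PiM[OF J]) (auto intro: prob_space_imp_sigma_finite ps sh)
    have tJm: "?tJ \<in> PiM J M \<rightarrow>\<^sub>M PiM J M" using shJ by (simp add: shift_le_def)
    have Y: "?tJ -` X \<inter> space (PiM J M) \<in> sets (PiM J M)"
      by (rule measurable_sets[OF tJm X])
    have "(\<integral>\<^sup>+x. indicator X x \<partial>PiM J M) \<le> (\<Prod>j\<in>J. ennreal (C j)) * (\<integral>\<^sup>+x. indicator X (?tJ x) \<partial>PiM J M)"
      using shJ X unfolding shift_le_def by (auto simp del: nn_integral_indicator)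
    also have "(\<integral>\<^sup>+x. indicator X (?tJ x) \<partial>PiM J M) = (\<integral>\<^sup>+x. indicator (?tJ -` X \<inter> space (PiM J M)) x \<partial>PiM J M)"
      by (rule nn_integral_cong) (auto simp: indicator_def)
    finally have EM: "emeasure (PiM J M) X \<le> ennreal (\<Prod>j\<in>J. C j) * emeasure (PiM J M) (?tJ -` X \<inter> space (PiM J M))"
      using X Y C by (simp add: prod_ennreal)
    have "measure (PiM J M) X \<le> (\<Prod>j\<in>J. C j) * measure (PiM J M) (?tJ -` X \<inter> space (PiM J M))"
    proof -
      have nn: "0 \<le> (\<Prod>j\<in>J. C j) * measure (PiM J M) (?tJ -` X \<inter> space (PiM J M))"
        using C by (simp add: prod_nonneg)
      have "measure (PiM J M) X \<le> (\<Prod>j\<in>J. C j) * measure (PiM J M) (?tJ -` X \<inter> space (PiM J M)) \<or>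
        (measure (PiM J M) X \<le> 0 \<and> (\<Prod>j\<in>J. C j) * measure (PiM J M) (?tJ -` X \<inter> space (PiM J M)) \<le> 0)"
        using EM C by (simp add: J.emeasure_eq_measure ennreal_mult'[symmetric] prod_nonneg ennreal_le_iff2)
      then show ?thesis using nn by linarith
    qed
    also have "\<dots> \<le> E * measure (PiM J M) (?tJ -` X \<inter> space (PiM J M))"
      using bnd[OF J] by (intro mult_right_mono) auto
    finally have ineqJ: "measure (PiM J M) X \<le> E * measure (PiM J M) (?tJ -` X \<inter> space (PiM J M))" .
    have m1: "measure ?P G = measure (PiM J M) X"
      unfolding GJ using emeasure_PiM_emb'[OF _ J X] by (simp add: measure_def)
    have pre: "?tau -` G \<inter> space ?P = emb UNIV J (?tJ -` X \<inter> space (PiM J M))"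
    proof -
      have sp: "?tau x \<in> space ?P" if "x \<in> space ?P" for x
        using measurable_space[OF taum that] .
      have key: "?tJ (restrict x J) = restrict (?tau x) J" for x
        by (auto simp: restrict_def)
      have rsp: "restrict x J \<in> space (PiM J M)" if "x \<in> space ?P" for x
        using that by (auto simp: space_PiM PiE_iff)
      have spP: "space ?P = (\<Pi>\<^sub>E i\<in>UNIV. space (M i))" by (simp add: space_PiM)
      show ?thesis
        unfolding GJ prod_emb_def spP[symmetric]
      proof (intro set_eqI iffI)
        fix x assume "x \<in> ?tau -` ((\<lambda>x. restrict x J) -` X \<inter> space ?P) \<inter> space ?P"
        then show "x \<in> (\<lambda>x. restrict x J) -` (?tJ -` X \<inter> space (PiM J M)) \<inter> space ?P"
          using key[of x] rsp[of x] by auto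
      next
        fix x assume "x \<in> (\<lambda>x. restrict x J) -` (?tJ -` X \<inter> space (PiM J M)) \<inter> space ?P"
        then show "x \<in> ?tau -` ((\<lambda>x. restrict x J) -` X \<inter> space ?P) \<inter> space ?P"
          using key[of x] sp[of x] by auto
      qed
    qed
    have m2: "measure nu G = measure (PiM J M) (?tJ -` X \<inter> space (PiM J M))"
      using G sets_PiM_generator emeasure_PiM_emb'[OF _ J Y]
      by (subst mnu) (auto simp: pre measure_def)
    show ?thesis using ineqJ m1 m2 by simp
  qed
  have "measure ?P S \<le> E * measure nu S"
    by (rule ineq_extend[OF algebra_generator fP fnu sets_PiM_generator _ E basic S])
       (simp add: snu sets_PiM_generator)
  then show ?thesis using mnu[OF S] by simp
qed



lemma theta_shift:
  fixes A :: "'n::finite \<Rightarrow> 'n \<Rightarrow> real" and D :: real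
  assumes t: "\<And>i. i \<noteq> i0 \<Longrightarrow> t2 i = t1 i" and D: "D = t2 i0 - t1 i0"
  shows "theta A h s t1 (\<lambda>k i. eta k i + (if i = i0 then (1 - s i0) ^ k * D else 0)) k =
    (\<lambda>i. theta A h s t2 eta k i - (if i = i0 then (1 - s i0) ^ k * D else 0))"
proof (induction k)
  case 0
  show ?case using t by (auto simp: D fun_eq_iff)
next
  case (Suc k)
  let ?sig = "\<lambda>k i. eta k i + (if i = i0 then (1 - s i0) ^ k * D else 0)"
  have IH: "theta A h s t1 ?sig k j = theta A h s t2 eta k j - (if j = i0 then (1 - s i0) ^ k * D else 0)" for j
    using Suc by (simp add: fun_eq_iff)
  have x: "(\<lambda>j. theta A h s t1 ?sig k j + ?sig k j) = (\<lambda>j. theta A h s t2 eta k j + eta k j)"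
    by (simp only: IH) (auto simp: fun_eq_iff)
  show ?case
    unfolding theta.simps x
    by (simp only: IH) (auto simp: fun_eq_iff algebra_simps)
qed

lemma Xmap_shift:
  fixes A :: "'n::finite \<Rightarrow> 'n \<Rightarrow> real"
  assumes t: "\<And>i. i \<noteq> i0 \<Longrightarrow> t2 i = t1 i"
  shows "Xmap A h s t1 (\<lambda>k i. eta k i + (if i = i0 then (1 - s i0) ^ k * (t2 i0 - t1 i0) else 0)) = Xmap A h s t2 eta"
proof -
  have th: "theta A h s t1 (\<lambda>k i. eta k i + (if i = i0 then (1 - s i0) ^ k * (t2 i0 - t1 i0) else 0)) k =
    (\<lambda>i. theta A h s t2 eta k i - (if i = i0 then (1 - s i0) ^ k * (t2 i0 - t1 i0) else 0))" for k
    by (rule theta_shift[OF t refl])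
  show ?thesis unfolding Xmap_def th by (simp add: fun_eq_iff)
qed

lemma geom_bound:
  fixes D c q s :: real
  assumes c: "0 < c" and qs: "\<bar>s - 1\<bar> < q" and D: "\<bar>D\<bar> \<le> \<delta>" and J: "finite J"
  shows "(\<Prod>k\<in>J. exp (\<bar>(1 - s) ^ k * D\<bar> / (c * q ^ k))) \<le> exp (\<delta> * q / (c * (q - \<bar>s - 1\<bar>)))"
proof -
  have q: "0 < q" using qs by linarith
  define r where "r = \<bar>1 - s\<bar> / q"
  have r0: "0 \<le> r" and r1: "r < 1" using q qs by (auto simp: r_def abs_minus_commute)
  define a where "a k = \<bar>D\<bar> / c * r ^ k" for k :: nat
  have ak: "\<bar>(1 - s) ^ k * D\<bar> / (c * q ^ k) = a k" for k
    using q c by (simp add: a_def r_def abs_mult power_abs power_divide field_simps)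
  have summ: "summable a" unfolding a_def
    by (rule summable_mult) (rule summable_geometric, use r0 r1 in simp)
  have "(\<Prod>k\<in>J. exp (\<bar>(1 - s) ^ k * D\<bar> / (c * q ^ k))) = exp (\<Sum>k\<in>J. a k)"
    by (simp add: ak exp_sum J)
  also have "(\<Sum>k\<in>J. a k) \<le> suminf a"
    by (rule sum_le_suminf[OF summ J]) (use c r0 in \<open>simp add: a_def\<close>)
  also have "suminf a = \<bar>D\<bar> / c * (1 / (1 - r))"
  proof -
    have g: "(\<Sum>n. r ^ n) = 1 / (1 - r)" by (rule suminf_geometric) (use r0 r1 in simp)
    have sg: "summable (\<lambda>n. r ^ n)" by (rule summable_geometric) (use r0 r1 in simp)
    show ?thesis unfolding a_def suminf_mult[OF sg] g ..
  qed
  also have "\<dots> = \<bar>D\<bar> * q / (c * (q - \<bar>s - 1\<bar>))"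
    using q c r1 by (simp add: r_def abs_minus_commute field_simps)
  also have "\<dots> \<le> \<delta> * q / (c * (q - \<bar>s - 1\<bar>))"
    using q c qs D by (intro divide_right_mono mult_right_mono) auto
  finally show ?thesis by simp
qed

lemma PiE_UNIV_UNIV: "(\<Pi>\<^sub>E i\<in>UNIV. UNIV) = UNIV"
  by (auto simp: PiE_def extensional_def)

theorem mainTheorem6:
  fixes A :: "'n::finite \<Rightarrow> 'n \<Rightarrow> real" and h \<delta> :: real
    and s c q :: "'n \<Rightarrow> real"
  assumes "graph_ok A"
    and "0 < h" and "h < 1 / dmax A"
    and "\<And>i. 0 < s i \<and> s i < 2"
    and "\<And>i. 0 < c i"
    and "\<And>i. \<bar>s i - 1\<bar> < q i \<and> q i < 1"
    and "0 < \<delta>"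
  defines "eps \<equiv> \<lambda>i. \<delta> * q i / (c i * (q i - \<bar>s i - 1\<bar>))"
  shows "(\<forall>i0 t1 t2 U. \<bar>t2 i0 - t1 i0\<bar> \<le> \<delta> \<longrightarrow> (\<forall>i. i \<noteq> i0 \<longrightarrow> t2 i = t1 i) \<longrightarrow>
            U \<in> sets (borel :: (nat \<Rightarrow> 'n \<Rightarrow> real) measure) \<longrightarrow>
            measure (noise c q) {eta \<in> space (noise c q). Xmap A h s t1 eta \<in> U}
            \<le> exp (eps i0) * measure (noise c q) {eta \<in> space (noise c q). Xmap A h s t2 eta \<in> U})
       \<and> diff_private A h s c q \<delta> (Max (range eps))"
proof -
  have cpos: "\<And>i. 0 < c i" by fact
  have qs: "\<And>i. \<bar>s i - 1\<bar> < q i" using assms(6) by blast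
  have qpos: "0 < q i" for i using qs[of i] by linarith
  have bpos: "0 < c i * q i ^ k" for i k using cpos[of i] qpos[of i] by simp
  define M where "M k = PiM UNIV (\<lambda>i. laplace (c i * q i ^ k))" for k :: nat
  have noiseM: "noise c q = PiM UNIV M" by (simp add: noise_def M_def[abs_def])
  have spM: "space (M k) = UNIV" for k by (simp add: M_def space_PiM laplace_def PiE_UNIV_UNIV)
  have spN: "space (noise c q) = UNIV" by (simp add: noiseM space_PiM spM PiE_UNIV_UNIV)
  have ps: "prob_space (M k)" for k
    unfolding M_def by (rule prob_space_PiM) (rule laplace_prob[OF bpos])
  have part1: "measure (noise c q) {eta \<in> space (noise c q). Xmap A h s t1 eta \<in> U}
            \<le> exp (eps i0) * measure (noise c q) {eta \<in> space (noise c q). Xmap A h s t2 eta \<in> U}"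
    if d: "\<bar>t2 i0 - t1 i0\<bar> \<le> \<delta>" and t: "\<And>i. i \<noteq> i0 \<Longrightarrow> t2 i = t1 i" for i0 t1 t2 U
  proof -
    define D where "D = t2 i0 - t1 i0"
    define T' where "T' k i = (\<lambda>y::real. if i = i0 then y + (1 - s i0) ^ k * D else y)" for k i
    define T where "T k = (\<lambda>x. \<lambda>i\<in>UNIV. T' k i (x i))" for k
    define C where "C k = exp (\<bar>(1 - s i0) ^ k * D\<bar> / (c i0 * q i0 ^ k))" for k
    have sh: "shift_le (M k) (T k) (ennreal (C k))" for k
    proof -
      have "shift_le (M k) (T k) (\<Prod>i\<in>UNIV. (if i = i0 then ennreal (C k) else 1))"
        unfolding M_def T_def
      proof (rule shift_le_PiM)
        show "finite (UNIV :: 'n set)" by simp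
        show "sigma_finite_measure (laplace (c j * q j ^ k))" for j
          by (rule prob_space_imp_sigma_finite) (rule laplace_prob[OF bpos])
        fix j :: 'n
        show "shift_le (laplace (c j * q j ^ k)) (T' k j) (if j = i0 then ennreal (C k) else 1)"
        proof (cases "j = i0")
          case True
          then show ?thesis
            unfolding T'_def C_def using shift_le_laplace[OF bpos[of i0 k], of "(1 - s i0) ^ k * D"]
            by simp
        next
          case False
          then show ?thesis unfolding T'_def using shift_le_id by simp
        qed
      qed
      then show ?thesis by simp
    qed
    have Cnn: "0 \<le> C k" for k by (simp add: C_def)
    have bnd: "(\<Prod>k\<in>J. C k) \<le> exp (eps i0)" if "finite J" for J
      unfolding C_def eps_def D_def
      by (rule geom_bound[OF cpos qs d that])
    have tau: "(\<lambda>x k. T k (x k)) = (\<lambda>x k i. x k i + (if i = i0 then (1 - s i0) ^ k * D else 0))"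
      by (auto simp: fun_eq_iff T_def T'_def)
    let ?S1 = "{eta \<in> space (noise c q). Xmap A h s t1 eta \<in> U}"
    let ?S2 = "{eta \<in> space (noise c q). Xmap A h s t2 eta \<in> U}"
    have pre: "(\<lambda>x k. T k (x k)) -` ?S1 \<inter> space (PiM UNIV M) = ?S2"
    proof -
      have XS: "Xmap A h s t1 (\<lambda>k i. eta k i + (if i = i0 then (1 - s i0) ^ k * (t2 i0 - t1 i0) else 0)) = Xmap A h s t2 eta" for eta
        by (rule Xmap_shift) (rule t)
      show ?thesis unfolding tau D_def using XS by (auto simp: spN noiseM[symmetric])
    qed
    show ?thesis
    proof (cases "?S1 \<in> sets (noise c q)")
      case True
      have "measure (PiM UNIV M) ?S1 \<le> exp (eps i0) * measure (PiM UNIV M) ((\<lambda>x k. T k (x k)) -` ?S1 \<inter> space (PiM UNIV M))"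
        by (rule inf_shift[OF ps sh Cnn bnd]) (use True noiseM in auto)
      then have "measure (PiM UNIV M) ?S1 \<le> exp (eps i0) * measure (PiM UNIV M) ?S2"
        by (simp only: pre)
      then show ?thesis by (simp only: noiseM)
    next
      case False
      then show ?thesis by (simp add: measure_notin_sets)
    qed
  qed
  show ?thesis
  proof (intro conjI allI impI)
    fix i0 :: 'n and t1 t2 :: "'n \<Rightarrow> real" and U :: "(nat \<Rightarrow> 'n \<Rightarrow> real) set"
    assume "\<bar>t2 i0 - t1 i0\<bar> \<le> \<delta>" "\<forall>i. i \<noteq> i0 \<longrightarrow> t2 i = t1 i"
    then show "measure (noise c q) {eta \<in> space (noise c q). Xmap A h s t1 eta \<in> U}
            \<le> exp (eps i0) * measure (noise c q) {eta \<in> space (noise c q). Xmap A h s t2 eta \<in> U}"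
      using part1 by blast
  next
    show "diff_private A h s c q \<delta> (Max (range eps))"
      unfolding diff_private_def adjacent_def
    proof (intro allI impI)
      fix t1 t2 :: "'n \<Rightarrow> real" and U :: "(nat \<Rightarrow> 'n \<Rightarrow> real) set"
      assume "\<exists>i0. \<bar>t2 i0 - t1 i0\<bar> \<le> \<delta> \<and> (\<forall>i. i \<noteq> i0 \<longrightarrow> t2 i = t1 i)"
      then obtain i0 where i0: "\<bar>t2 i0 - t1 i0\<bar> \<le> \<delta>" "\<And>i. i \<noteq> i0 \<Longrightarrow> t2 i = t1 i" by blast
      have "measure (noise c q) {eta \<in> space (noise c q). Xmap A h s t1 eta \<in> U}
            \<le> exp (eps i0) * measure (noise c q) {eta \<in> space (noise c q). Xmap A h s t2 eta \<in> U}"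
        by (rule part1) (use i0 in auto)
      also have "\<dots> \<le> exp (Max (range eps)) * measure (noise c q) {eta \<in> space (noise c q). Xmap A h s t2 eta \<in> U}"
        by (intro mult_right_mono) (auto intro: Max_ge)
      finally show "measure (noise c q) {eta \<in> space (noise c q). Xmap A h s t1 eta \<in> U}
            \<le> exp (Max (range eps)) * measure (noise c q) {eta \<in> space (noise c q). Xmap A h s t2 eta \<in> U}" .
    qed
  qed
qed


end
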